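(* In the SquaredEquality formula $EQ^2(n)$, every universal literal occurrence ($u_i$, $\overline{u_i}$, $v_j$, $\overline{v_j}$) in every clause is a QRAT-literal, and hence can be removed from its clause by the QRATU rule.
   Context: A QBF $Q.\phi$ has quantifier prefix $Q$ and CNF matrix $\phi$; $k\le_Q \ell$ means the variable of $k$ is quantified at or to the left of the block of $\ell$. The SquaredEquality formula is $EQ^2(n) := Q(n).eq^2(n)$ with prefix $Q(n) := \exists\{x_1,y_1,\dots,x_n,y_n\}\,\forall\{u_1,v_1,\dots,u_n,v_n\}\,\exists\{t_{i,j} : i,j\in[n]\}$ and matrix consisting of the clauses $\{x_i,y_j,u_i,v_j,t_{i,j}\}$, $\{x_i,\overline{y_j},u_i,\overline{v_j},t_{i,j}\}$, $\{\overline{x_i},y_j,\overline{u_i},v_j,t_{i,j}\}$, $\{\overline{x_i},\overline{y_j},\overline{u_i},\overline{v_j},t_{i,j}\}$ for $i,j\in[n]$, and the clause $(\overline{t_{i,j}} : i,j\in[n])$. Unit propagation on a CNF $F$ repeatedly sets unit-clause literals true (removing satisfied clauses and deleting false literals) until no unit clause remains or the empty clause appears. A clause $C$ is an asymmetric tautology (AT) w.r.t. $\phi$ if unit propagation on $\phi\wedge\overline{C}$ derives the empty clause (in particular every tautological clause is an AT). The outer resolvent of $C\vee\ell$ and $D\vee\overline{\ell}$ is $OR(Q,C,D,\ell) := C\cup\{k\in D : k\le_Q \ell\}$. A literal $\ell$ is a QRAT-literal in the clause $C\vee\ell$ w.r.t. $Q.\phi$ if for every clause $D\vee\overline{\ell}\in\phi$,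 $OR(Q,C,D,\ell)$ is an AT w.r.t. $\phi$. The QRATU rule of the QRAT proof system allows deleting a universal QRAT-literal from its clause. *)

theory Defs
  imports Main
begin

datatype 'v lit = Pos 'v | Neg 'v

fun var :: "'v lit \<Rightarrow> 'v" where
  "var (Pos x) = x" | "var (Neg x) = x"

fun neg :: "'v lit \<Rightarrow> 'v lit" where
  "neg (Pos x) = Neg x" | "neg (Neg x) = Pos x"

type_synonym 'v clause = "'v lit set"
type_synonym 'v cnf = "'v clause set"

datatype quant = Exists | Forall

text \<open>A quantifier prefix is a list of blocks, leftmost first.\<close>
type_synonym 'v prefix = "(quant \<times> 'v set) list"

definition le_Q :: "'v prefix \<Rightarrow> 'v lit \<Rightarrow> 'v lit \<Rightarrow> bool" where
  "le_Q Q k l \<longleftrightarrow> (\<exists>i j. i \<le> j \<and> j < length Q \<and> var k \<in> snd (Q ! i) \<and> var l \<in> snd (Q ! j))"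

definition universal :: "'v prefix \<Rightarrow> 'v lit \<Rightarrow> bool" where
  "universal Q l \<longleftrightarrow> (\<exists>i < length Q. fst (Q ! i) = Forall \<and> var l \<in> snd (Q ! i))"

definition up_step :: "'v cnf \<Rightarrow> 'v cnf \<Rightarrow> bool" where
  "up_step F F' \<longleftrightarrow> (\<exists>l. {l} \<in> F \<and> F' = (\<lambda>C. C - {neg l}) ` {C \<in> F. l \<notin> C})"

definition up_refutes :: "'v cnf \<Rightarrow> bool" where
  "up_refutes F \<longleftrightarrow> (\<exists>F'. up_step\<^sup>*\<^sup>* F F' \<and> {} \<in> F')"

definition neg_clause :: "'v clause \<Rightarrow> 'v cnf" where
  "neg_clause C = (\<lambda>k. {neg k}) ` C"

definition asym_taut :: "'v cnf \<Rightarrow> 'v clause \<Rightarrow> bool" where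
  "asym_taut \<phi> C \<longleftrightarrow> up_refutes (\<phi> \<union> neg_clause C)"

definition outer_resolvent :: "'v prefix \<Rightarrow> 'v clause \<Rightarrow> 'v clause \<Rightarrow> 'v lit \<Rightarrow> 'v clause" where
  "outer_resolvent Q C D l = C \<union> {k \<in> D. le_Q Q k l}"

definition qrat_literal :: "'v prefix \<Rightarrow> 'v cnf \<Rightarrow> 'v clause \<Rightarrow> 'v lit \<Rightarrow> bool" where
  "qrat_literal Q \<phi> C l \<longleftrightarrow> l \<in> C \<and>
     (\<forall>D' \<in> \<phi>. neg l \<in> D' \<longrightarrow> asym_taut \<phi> (outer_resolvent Q (C - {l}) (D' - {neg l}) l))"

definition qratu_step :: "'v prefix \<Rightarrow> 'v cnf \<Rightarrow> 'v cnf \<Rightarrow> bool" where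
  "qratu_step Q \<phi> \<phi>' \<longleftrightarrow> (\<exists>C l. C \<in> \<phi> \<and> l \<in> C \<and> universal Q l \<and> qrat_literal Q \<phi> C l \<and>
      \<phi>' = insert (C - {l}) (\<phi> - {C}))"

datatype eqvar = X nat | Y nat | U nat | V nat | T nat nat

definition Q2 :: "nat \<Rightarrow> eqvar prefix" where
  "Q2 n = [(Exists, {X i | i. i \<in> {1..n}} \<union> {Y i | i. i \<in> {1..n}}),
           (Forall, {U i | i. i \<in> {1..n}} \<union> {V i | i. i \<in> {1..n}}),
           (Exists, {T i j | i j. i \<in> {1..n} \<and> j \<in> {1..n}})]"

definition eq2 :: "nat \<Rightarrow> eqvar cnf" where
  "eq2 n = (\<Union>i \<in> {1..n}. \<Union>j \<in> {1..n}.
      {{Pos (X i), Pos (Y j), Pos (U i), Pos (V j), Pos (T i j)},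
       {Pos (X i), Neg (Y j), Pos (U i), Neg (V j), Pos (T i j)},
       {Neg (X i), Pos (Y j), Neg (U i), Pos (V j), Pos (T i j)},
       {Neg (X i), Neg (Y j), Neg (U i), Neg (V j), Pos (T i j)}})
    \<union> {{Neg (T i j) | i j. i \<in> {1..n} \<and> j \<in> {1..n}}}"

end

theory Submission
  imports Defs
begin

lemma neg_neq: "neg p \<noteq> p" by (cases p) auto
lemma neg_neg: "neg (neg p) = p" by (cases p) auto

lemma at_taut:
  assumes "p \<in> C" "neg p \<in> C"
  shows "asym_taut \<phi> C"
proof -
  let ?F = "\<phi> \<union> neg_clause C"
  let ?F' = "(\<lambda>D. D - {neg (neg p)}) ` {D \<in> ?F. neg p \<notin> D}"
  have u1: "{neg p} \<in> ?F" using assms(1) unfolding neg_clause_def by auto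
  have u2: "{p} \<in> ?F" using assms(2) unfolding neg_clause_def by (force simp: neg_neg)
  have "up_step ?F ?F'" unfolding up_step_def using u1 by blast
  moreover have "{} \<in> ?F'"
  proof -
    have "{p} \<in> {D \<in> ?F. neg p \<notin> D}" using u2 neg_neq[of p] by auto
    then have "{p} - {neg (neg p)} \<in> ?F'" by blast
    then show ?thesis by (simp add: neg_neg)
  qed
  ultimately show ?thesis unfolding asym_taut_def up_refutes_def by blast
qed

lemma key:
  assumes "p \<in> C" "p \<noteq> l" "neg p \<in> D" "neg p \<noteq> neg l" "le_Q Q (neg p) l"
  shows "asym_taut \<phi> (outer_resolvent Q (C - {l}) (D - {neg l}) l)"
  by (rule at_taut[of p]) (use assms in \<open>auto simp: outer_resolvent_def\<close>)

lemma pu: "D \<in> eq2 n \<Longrightarrow> Pos (U i) \<in> D \<Longrightarrow> Pos (X i) \<in> D \<and> i \<in> {1..n}"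
  unfolding eq2_def by auto
lemma nu: "D \<in> eq2 n \<Longrightarrow> Neg (U i) \<in> D \<Longrightarrow> Neg (X i) \<in> D \<and> i \<in> {1..n}"
  unfolding eq2_def by auto
lemma pv: "D \<in> eq2 n \<Longrightarrow> Pos (V i) \<in> D \<Longrightarrow> Pos (Y i) \<in> D \<and> i \<in> {1..n}"
  unfolding eq2_def by auto
lemma nv: "D \<in> eq2 n \<Longrightarrow> Neg (V i) \<in> D \<Longrightarrow> Neg (Y i) \<in> D \<and> i \<in> {1..n}"
  unfolding eq2_def by auto

lemma leX: "i \<in> {1..n} \<Longrightarrow> le_Q (Q2 n) (Pos (X i)) (Pos (U i)) \<and> le_Q (Q2 n) (Neg (X i)) (Pos (U i))
  \<and> le_Q (Q2 n) (Pos (X i)) (Neg (U i)) \<and> le_Q (Q2 n) (Neg (X i)) (Neg (U i))"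
  unfolding le_Q_def Q2_def
  by (intro conjI; rule exI[of _ 0], rule exI[of _ 1]) auto
lemma leY: "i \<in> {1..n} \<Longrightarrow> le_Q (Q2 n) (Pos (Y i)) (Pos (V i)) \<and> le_Q (Q2 n) (Neg (Y i)) (Pos (V i))
  \<and> le_Q (Q2 n) (Pos (Y i)) (Neg (V i)) \<and> le_Q (Q2 n) (Neg (Y i)) (Neg (V i))"
  unfolding le_Q_def Q2_def
  by (intro conjI; rule exI[of _ 0], rule exI[of _ 1]) auto

lemma qrat:
  assumes "C \<in> eq2 n" and "l \<in> C" and "universal (Q2 n) l"
  shows "qrat_literal (Q2 n) (eq2 n) C l"
proof -
  obtain i where vl: "var l = U i \<or> var l = V i"
    using assms(3) unfolding universal_def Q2_def by (auto simp: less_Suc_eq nth_Cons')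
  show ?thesis unfolding qrat_literal_def
  proof (intro conjI ballI impI)
    show "l \<in> C" by fact
    fix D assume D: "D \<in> eq2 n" "neg l \<in> D"
    show "asym_taut (eq2 n) (outer_resolvent (Q2 n) (C - {l}) (D - {neg l}) l)"
    proof (cases l)
      case (Pos x)
      then show ?thesis using vl
      proof (elim disjE)
        assume "l = Pos x" "var l = U i"
        then show ?thesis using pu[OF assms(1)] nu[OF D(1)] D(2) assms(2) leX
          by (intro key[of "Pos (X i)"]) auto
      next
        assume "l = Pos x" "var l = V i"
        then show ?thesis using pv[OF assms(1)] nv[OF D(1)] D(2) assms(2) leY
          by (intro key[of "Pos (Y i)"]) auto
      qed
    next
      case (Neg x)
      then show ?thesis using vl
      proof (elim disjE)
        assume "l = Neg x" "var l = U i"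
        then show ?thesis using nu[OF assms(1)] pu[OF D(1)] D(2) assms(2) leX
          by (intro key[of "Neg (X i)"]) auto
      next
        assume "l = Neg x" "var l = V i"
        then show ?thesis using nv[OF assms(1)] pv[OF D(1)] D(2) assms(2) leY
          by (intro key[of "Neg (Y i)"]) auto
      qed
    qed
  qed
qed

theorem lemma9:
  assumes "C \<in> eq2 n" and "l \<in> C" and "universal (Q2 n) l"
  shows "qrat_literal (Q2 n) (eq2 n) C l \<and> qratu_step (Q2 n) (eq2 n) (insert (C - {l}) (eq2 n - {C}))"
  using qrat[OF assms] assms unfolding qratu_step_def by blast

end
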